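(* Let $0<\gamma<1$ and let the coefficients $l_k^{2,\gamma}$ be defined by $\left((1-\zeta)+\tfrac12(1-\zeta)^2\right)^{\gamma}=\sum_{k=0}^\infty l_k^{2,\gamma}\zeta^k$ (equivalently $l_m^{2,\gamma}=(3/2)^{\gamma}\sum_{k=0}^{m}3^{-k}g_k^\gamma g_{m-k}^\gamma$ with $g_k^\gamma=(-1)^k\binom{\gamma}{k}$). Then $$g(\gamma,z)=\sum_{k=1}^\infty l_k^{2,\gamma}\left(\cos(kz)-1\right)\ge0\quad\text{for all } z\in[0,\pi].$$ *)

theory Defs
  imports Complex_Main
begin

definition gcoef :: "real \<Rightarrow> nat \<Rightarrow> real" where
  "gcoef \<gamma> k = (-1) ^ k * (\<gamma> gchoose k)"

text \<open>Coefficients of ((1-x) + (1/2)(1-x)^2)^gamma, via the explicit formula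
  l_m = (3/2)^gamma * sum_{k=0}^m 3^(-k) g_k g_(m-k).\<close>
definition lcoef :: "real \<Rightarrow> nat \<Rightarrow> real" where
  "lcoef \<gamma> m = (3/2) powr \<gamma> * (\<Sum>k=0..m. (1/3) ^ k * gcoef \<gamma> k * gcoef \<gamma> (m - k))"

end

theory Submission imports Defs "HOL-Analysis.Analysis" begin

lemma gchoose_rec: "(a::real) gchoose (Suc k) = (a - k) / (k+1) * (a gchoose k)"
  using gbinomial_mult_1[of a k] by (simp add: field_simps)

lemma gcoef_rec: "gcoef \<gamma> (Suc k) = (k - \<gamma>) / (k+1) * gcoef \<gamma> k"
  unfolding gcoef_def gchoose_rec by (simp add: field_simps)

lemma gcoef_0[simp]: "gcoef \<gamma> 0 = 1" by (simp add: gcoef_def)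

lemma gcoef_neg:
  assumes "0 < \<gamma>" "\<gamma> < 1"
  shows "gcoef \<gamma> (Suc k) \<le> 0"
proof (induction k)
  case 0 then show ?case using assms by (simp add: gcoef_rec)
next
  case (Suc k)
  have "(real (Suc k) - \<gamma>) / (real (Suc k) + 1) \<ge> 0" using assms by auto
  then show ?case using Suc unfolding gcoef_rec[of \<gamma> "Suc k"]
    by (metis mult_nonneg_nonpos)
qed

lemma gcoef_psum: "(\<Sum>k\<le>m. gcoef \<gamma> k) = (-1)^m * ((\<gamma> - 1) gchoose m)"
  using gbinomial_sum_lower_neg[of \<gamma> m] by (simp add: gcoef_def mult.commute)

lemma gcoef_psum_nonneg:
  assumes "0 < \<gamma>" "\<gamma> < 1"
  shows "(\<Sum>k\<le>m. gcoef \<gamma> k) \<ge> 0"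
proof -
  have "(-1)^m * ((\<gamma> - 1) gchoose m) \<ge> 0"
  proof (induction m)
    case 0 then show ?case by simp
  next
    case (Suc m)
    have "(-1)^(Suc m) * ((\<gamma> - 1) gchoose Suc m) = ((m + 1 - \<gamma>)/(m+1)) * ((-1)^m * ((\<gamma> - 1) gchoose m))"
      unfolding gchoose_rec by (simp add: field_simps)
    moreover have "(m + 1 - \<gamma>)/(m+1) \<ge> 0" using assms by auto
    ultimately show ?case using Suc by (metis mult_nonneg_nonneg)
  qed
  then show ?thesis by (simp add: gcoef_psum)
qed

lemma gcoef_abs_summable:
  assumes "0 < \<gamma>" "\<gamma> < 1"
  shows "summable (\<lambda>k. \<bar>gcoef \<gamma> k\<bar>)"
proof (rule bounded_imp_summable[where B=2])
  fix n
  have e: "\<bar>gcoef \<gamma> k\<bar> = (if k = 0 then 2 else 0) - gcoef \<gamma> k" for k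
    using gcoef_neg[OF assms, of "k - 1"] by (cases k) auto
  have "(\<Sum>k\<le>n. \<bar>gcoef \<gamma> k\<bar>) = (\<Sum>k\<le>n. (if k = 0 then 2 else 0)) - (\<Sum>k\<le>n. gcoef \<gamma> k)"
    unfolding e by (simp add: sum_subtractf)
  also have "\<dots> = 2 - (\<Sum>k\<le>n. gcoef \<gamma> k)" by (simp add: sum.delta)
  finally show "(\<Sum>k\<le>n. \<bar>gcoef \<gamma> k\<bar>) \<le> 2" using gcoef_psum_nonneg[OF assms, of n] by linarith
qed auto

lemma gchoose_of_real: "(of_real a :: complex) gchoose k = of_real (a gchoose k)"
proof (induction k)
  case 0 then show ?case by simp
next
  case (Suc k)
  have r: "(b::complex) gchoose (Suc k) = (b - k) / (k+1) * (b gchoose k)" for b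
  proof -
    have nz: "(1 + complex_of_nat k) \<noteq> 0" "(complex_of_nat k + 1) \<noteq> 0"
    proof -
      have "complex_of_nat (Suc k) \<noteq> 0" by (simp only: of_nat_eq_0_iff)
      then show "(1 + complex_of_nat k) \<noteq> 0" "(complex_of_nat k + 1) \<noteq> 0" by (simp_all add: add.commute)
    qed
    show ?thesis using gbinomial_mult_1[of b k] nz by (simp add: field_simps)
  qed
  show ?case unfolding r gchoose_rec Suc by simp
qed

lemma G_interior:
  assumes "norm (w::complex) < 1"
  shows "(\<lambda>k. of_real (gcoef \<gamma> k) * w^k) sums ((1 - w) powr of_real \<gamma>)"
proof -
  have "(\<lambda>n. (of_real \<gamma> gchoose n) * (-w)^n) sums (1 + (-w)) powr of_real \<gamma>"
    by (rule gen_binomial_complex) (use assms in simp)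
  moreover have "(of_real \<gamma> gchoose n) * (-w)^n = of_real (gcoef \<gamma> n) * w^n" for n
  proof -
    have "(-w)^n = (-1)^n * w^n" by (rule power_minus)
    then show ?thesis unfolding gchoose_of_real gcoef_def by simp
  qed
  ultimately show ?thesis by simp
qed

lemma G_norm_summable:
  assumes "0 < \<gamma>" "\<gamma> < 1" "norm (w::complex) \<le> 1"
  shows "summable (\<lambda>k. norm (of_real (gcoef \<gamma> k) * w^k))"
proof (rule summable_comparison_test[OF _ gcoef_abs_summable[OF assms(1,2)]])
  show "\<exists>N. \<forall>n\<ge>N. norm (norm (of_real (gcoef \<gamma> n) * w ^ n)) \<le> \<bar>gcoef \<gamma> n\<bar>"
    using assms(3) by (auto simp: norm_mult norm_power intro!: mult_left_le power_le_one)
qed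

lemma G_boundary:
  assumes "0 < \<gamma>" "\<gamma> < 1" "norm (w::complex) \<le> 1"
  shows "(\<lambda>k. of_real (gcoef \<gamma> k) * w^k) sums ((1 - w) powr of_real \<gamma>)"
proof -
  define F where "F = (\<lambda>w::complex. \<Sum>k. of_real (gcoef \<gamma> k) * w^k)"
  have ul: "uniform_limit (cball 0 1) (\<lambda>n x. \<Sum>i<n. of_real (gcoef \<gamma> i) * x^i) F sequentially"
    unfolding F_def
    by (rule Weierstrass_m_test[OF _ gcoef_abs_summable[OF assms(1,2)]])
       (auto simp: norm_mult norm_power intro!: mult_left_le power_le_one)
  have cont: "continuous_on (cball 0 1) F"
    by (rule uniform_limit_theorem[OF _ ul]) (intro always_eventually allI continuous_intros, simp)
  define x where "x = (\<lambda>n::nat. of_real (1 - inverse (real (Suc (Suc n)))) * w)"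
  have xlim: "x \<longlonglongrightarrow> w"
  proof -
    have "(\<lambda>n::nat. 1 - inverse (real (Suc (Suc n)))) \<longlonglongrightarrow> 1 - 0"
      by (intro tendsto_intros LIMSEQ_Suc[OF LIMSEQ_inverse_real_of_nat])
    then have "(\<lambda>n. of_real (1 - inverse (real (Suc (Suc n)))) * w) \<longlonglongrightarrow> of_real 1 * w"
      by (intro tendsto_intros) simp
    then show ?thesis by (simp add: x_def)
  qed
  have xn: "norm (x n) < 1" for n
  proof -
    have "norm (x n) = (1 - inverse (real (Suc (Suc n)))) * norm w"
    proof -
      have "0 \<le> 1 - inverse (real (Suc (Suc n)))"
        using inverse_le_1_iff[of "real (Suc (Suc n))"] by simp
      then show ?thesis unfolding x_def norm_mult norm_of_real by simp
    qed
    also have "\<dots> \<le> 1 - inverse (real (Suc (Suc n)))"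
      using assms(3) by (intro mult_left_le) (auto simp: field_simps)
    also have "\<dots> < 1" by simp
    finally show ?thesis .
  qed
  have "(\<lambda>n. F (x n)) \<longlonglongrightarrow> F w"
    using continuous_on_tendsto_compose[OF cont xlim] assms(3) xn
    by (auto simp: o_def less_imp_le)
  moreover have "(\<lambda>n. F (x n)) = (\<lambda>n. (1 - x n) powr of_real \<gamma>)"
    using G_interior[OF xn] by (auto simp: F_def sums_iff)
  moreover have "(\<lambda>n. (1 - x n) powr of_real \<gamma>) \<longlonglongrightarrow> (1 - w) powr of_real \<gamma>"
  proof (rule tendsto_powr_complex')
    show "((\<lambda>n. 1 - x n) \<longlongrightarrow> 1 - w) sequentially" by (intro tendsto_intros xlim)
    show "1 - w \<notin> \<real>\<^sub>\<le>\<^sub>0 \<or> 1 - w = 0 \<and> 0 < Re (complex_of_real \<gamma>)"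
    proof (cases "w = 1")
      case True then show ?thesis using assms by simp
    next
      case False
      have "Re w \<le> 1" using abs_Re_le_cmod[of w] assms(3) by linarith
      moreover have "Re w = 1 \<Longrightarrow> Im w = 0"
      proof -
        assume h: "Re w = 1"
        have "(Re w)^2 + (Im w)^2 \<le> 1"
          using assms(3) by (metis cmod_power2 norm_ge_zero power_le_one)
        then show "Im w = 0" using h by (simp add: power2_eq_square) (use zero_le_square[of "Im w"] in auto)
      qed
      ultimately have "Re (1 - w) > 0" using False by (cases w) (auto simp: complex_eq_iff)
      then show ?thesis by (auto simp: complex_nonpos_Reals_iff)
    qed
  qed simp
  ultimately have "F w = (1 - w) powr of_real \<gamma>" using LIMSEQ_unique by metis
  moreover have "summable (\<lambda>k. of_real (gcoef \<gamma> k) * w^k)"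
    using summable_norm_cancel[OF G_norm_summable[OF assms]] .
  ultimately show ?thesis by (simp add: F_def sums_iff)
qed

lemma re_powr_prod:
  fixes u v :: complex
  assumes g: "0 < \<gamma>" "\<gamma> < 1" and u: "Re u > 0" and v: "Re v \<ge> 0" and uv: "Re (u * v) \<ge> 0"
  shows "Re (u powr of_real \<gamma> * v powr of_real \<gamma>) \<ge> 0"
proof (cases "v = 0")
  case True then show ?thesis by simp
next
  case False
  have u0: "u \<noteq> 0" using u by auto
  have lu: "\<bar>Im (Ln u)\<bar> < pi/2" using Re_Ln_pos_lt_imp u by blast
  have lv: "\<bar>Im (Ln v)\<bar> \<le> pi/2" using Re_Ln_pos_le[OF False] v by blast
  have L: "Ln (u * v) = Ln u + Ln v"
    by (rule Ln_times_simple) (use lu lv u0 False in auto)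
  have luv: "\<bar>Im (Ln (u * v))\<bar> \<le> pi/2" using Re_Ln_pos_le[of "u * v"] uv u0 False by simp
  have e: "u powr of_real \<gamma> * v powr of_real \<gamma> = exp (of_real \<gamma> * Ln (u * v))"
    using u0 False by (simp add: powr_def L exp_add distrib_left)
  have "\<bar>\<gamma> * Im (Ln (u * v))\<bar> \<le> pi/2"
  proof -
    have "\<bar>\<gamma> * Im (Ln (u * v))\<bar> = \<gamma> * \<bar>Im (Ln (u * v))\<bar>" using g by (simp add: abs_mult)
    also have "\<dots> \<le> 1 * \<bar>Im (Ln (u * v))\<bar>" using g by (intro mult_right_mono) auto
    finally show ?thesis using luv by simp
  qed
  then have "cos (\<gamma> * Im (Ln (u * v))) \<ge> 0" by (intro cos_ge_zero) auto
  then show ?thesis unfolding e Re_exp by simp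
qed

lemma L_sums:
  assumes "0 < \<gamma>" "\<gamma> < 1" "norm (w::complex) \<le> 1"
  shows "(\<lambda>m. of_real (lcoef \<gamma> m) * w^m) sums
     (of_real ((3/2) powr \<gamma>) * ((1 - w/3) powr of_real \<gamma> * (1 - w) powr of_real \<gamma>))"
proof -
  define a where "a = (\<lambda>k. of_real (gcoef \<gamma> k) * (w/3)^k)"
  define b where "b = (\<lambda>k. of_real (gcoef \<gamma> k) * w^k)"
  have w3: "norm (w/3) \<le> 1" using assms(3) by (simp add: norm_divide)
  have CP: "(\<lambda>m. \<Sum>i\<le>m. a i * b (m - i)) sums (suminf a * suminf b)"
    unfolding a_def b_def by (intro Cauchy_product_sums G_norm_summable assms w3)
  have sa: "suminf a = (1 - w/3) powr of_real \<gamma>"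
    using G_boundary[OF assms(1,2) w3] unfolding a_def by (simp add: sums_iff)
  have sb: "suminf b = (1 - w) powr of_real \<gamma>"
    using G_boundary[OF assms] unfolding b_def by (simp add: sums_iff)
  have eq: "(\<Sum>i\<le>m. a i * b (m - i)) = of_real (\<Sum>k=0..m. (1/3) ^ k * gcoef \<gamma> k * gcoef \<gamma> (m - k)) * w^m" for m
  proof -
    have "a i * b (m - i) = of_real ((1/3) ^ i * gcoef \<gamma> i * gcoef \<gamma> (m - i)) * w^m" if "i \<le> m" for i
    proof -
      have "w^i * w^(m-i) = w^m" using that by (simp flip: power_add)
      then show ?thesis unfolding a_def b_def
        by (simp add: power_divide field_simps)
    qed
    then have "(\<Sum>i\<le>m. a i * b (m - i)) = (\<Sum>i\<le>m. of_real ((1/3) ^ i * gcoef \<gamma> i * gcoef \<gamma> (m - i)) * w^m)"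
      by (intro sum.cong) auto
    also have "\<dots> = of_real (\<Sum>k=0..m. (1/3) ^ k * gcoef \<gamma> k * gcoef \<gamma> (m - k)) * w^m"
      by (simp add: sum_distrib_right atLeast0AtMost)
    finally show ?thesis .
  qed
  have "(\<lambda>m. of_real ((3/2) powr \<gamma>) * (\<Sum>i\<le>m. a i * b (m - i))) sums (of_real ((3/2) powr \<gamma>) * (suminf a * suminf b))"
    by (rule sums_mult[OF CP])
  moreover have "of_real ((3/2) powr \<gamma>) * (\<Sum>i\<le>m. a i * b (m - i)) = of_real (lcoef \<gamma> m) * w^m" for m
    unfolding eq lcoef_def by simp
  ultimately show ?thesis unfolding sa sb by simp
qed

theorem lemma3p6:
  fixes \<gamma> z :: real
  assumes "0 < \<gamma>" and "\<gamma> < 1" and "0 \<le> z" and "z \<le> pi"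
  shows "summable (\<lambda>k. lcoef \<gamma> (Suc k) * (cos (real (Suc k) * z) - 1))
       \<and> (\<Sum>k. lcoef \<gamma> (Suc k) * (cos (real (Suc k) * z) - 1)) \<ge> 0"
proof -
  define w where "w = cis z"
  define u where "u = 1 - w/3"
  define v where "v = 1 - w"
  define R where "R = Re (of_real ((3/2) powr \<gamma>) * (u powr of_real \<gamma> * v powr of_real \<gamma>))"
  have S1: "(\<lambda>m. of_real (lcoef \<gamma> m) * w^m) sums
     (of_real ((3/2) powr \<gamma>) * (u powr of_real \<gamma> * v powr of_real \<gamma>))"
    unfolding u_def v_def by (rule L_sums) (use assms in \<open>auto simp: w_def\<close>)
  have S1r: "(\<lambda>m. Re (of_real (lcoef \<gamma> m) * w^m)) sums R"
    using S1 unfolding sums_complex_iff R_def by blast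
  have E: "(\<lambda>m. Re (of_real (lcoef \<gamma> m) * w^m)) = (\<lambda>m. lcoef \<gamma> m * cos (real m * z))"
    unfolding w_def by (rule ext) (simp add: Complex.DeMoivre)
  have S1': "(\<lambda>m. lcoef \<gamma> m * cos (real m * z)) sums R"
    using S1r unfolding E .
  have S2: "(\<lambda>m. of_real (lcoef \<gamma> m) * (1::complex)^m) sums
     (of_real ((3/2) powr \<gamma>) * ((1 - 1/3) powr of_real \<gamma> * (1 - 1) powr of_real \<gamma>))"
    by (rule L_sums) (use assms in auto)
  then have "(\<lambda>m. Re (of_real (lcoef \<gamma> m) * 1^m)) sums 0"
    unfolding sums_complex_iff by simp
  then have S2': "(\<lambda>m. lcoef \<gamma> m) sums 0" by simp
  have "(\<lambda>m. lcoef \<gamma> m * cos (real m * z) - lcoef \<gamma> m) sums (R - 0)"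
    by (rule sums_diff[OF S1' S2'])
  then have "(\<lambda>m. lcoef \<gamma> m * (cos (real m * z) - 1)) sums R"
    by (simp add: algebra_simps)
  then have S: "(\<lambda>k. lcoef \<gamma> (Suc k) * (cos (real (Suc k) * z) - 1)) sums R"
    by (subst sums_Suc_iff) simp
  have Ru: "Re u > 0"
  proof -
    have "cos z < 3" using cos_le_one[of z] by linarith
    then show ?thesis by (simp add: u_def w_def)
  qed
  have Rv: "Re v \<ge> 0" by (simp add: v_def w_def)
  have Ruv: "Re (u * v) \<ge> 0"
  proof -
    have "Re (u * v) = (1 - cos z / 3) * (1 - cos z) - (sin z / 3) * sin z"
      by (simp add: u_def v_def w_def)
    also have "\<dots> = 2/3 * (1 - cos z)^2"
    proof -
      have ss: "sin z * sin z = 1 - cos z * cos z" using sin_squared_eq[of z] by (simp add: power2_eq_square)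
      have "(1 - cos z / 3) * (1 - cos z) - (sin z / 3) * sin z = (1 - cos z / 3) * (1 - cos z) - (sin z * sin z) / 3"
        by simp
      also have "\<dots> = 2/3 * (1 - cos z)^2" unfolding ss by (simp add: power2_eq_square field_simps)
      finally show ?thesis .
    qed
    finally have "Re (u * v) = 2/3 * (1 - cos z)^2" .
    then show ?thesis using zero_le_power2[of "1 - cos z"] by linarith
  qed
  have "R \<ge> 0"
    unfolding R_def using re_powr_prod[OF assms(1,2) Ru Rv Ruv] by simp
  then show ?thesis using S by (simp add: sums_iff)
qed

end
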